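(* Let $A$ be a circular $m\times n$ matrix, $b\in\mathbb{Z}_+^m$, $x^*\in Q(A,b)\setminus Q^*(A,b)$, and let $\Gamma$ be a circuit with negative cost in $D(A,x^* )$. Then the $\Gamma$-inequality is violated by $x^*$.
   Context: Notation: $[n]=\{1,\dots,n\}$ with addition mod $n$ (index $0$ identified with $n$); for $a,c\in[n]$ with $t\ge0$ minimal such that $a+t\equiv c\pmod n$, $[a,c)_n=\{a,\dots,a+t-1\}$ (mod $n$). An $m\times n$ $\{0,1\}$-matrix $A$ is circular if for each row $i$ there are $\ell_i\in[n]$ and an integer $2\le k_i\le n-1$ with row $i$ the incidence vector of $[\ell_i,\ell_i+k_i)_n$. $Q(A,b)=\{x\ge0:Ax\ge b\}$, $Q^*(A,b)=\operatorname{conv}(Q(A,b)\cap\mathbb{Z}^n)$. $D(A)$: node set $[n]$ (labels mod $n$); forward arcs $a_i=(\ell_i-1,\ell_i+k_i-1)$ ($i\in[m]$, length $k_i$), $a_{m+j}=(j-1,j)$ ($j\in[n]$, length $1$); reverse arcs $\bar a_i=(\ell_i+k_i-1,\ell_i-1)$ (length $-k_i$), $\bar a_{m+j}=(j,j-1)$ (length $-1$). A circuit is a simple directed circuit; winding number $p(\Gamma)$: $p(\Gamma)n=\sum_{a\in E(\Gamma)}l(a)$. A forward row arc $a_i$ jumps over $j$ iff $j\in[\ell_i,\ell_i+k_i)_n$; $(j-1,j)$ jumps over $j$ only; $\bar a_k$ jumps over $j$ iff $a_k$ does. $p^-(\Gamma,j)$ = number of reverse arcs of $\Gamma$ jumping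 over $j$. $\Gamma$-inequality (for $p(\Gamma)\ne0$): with $t(\Gamma,b)=\sum_{i:a_i\in E(\Gamma)}b_i-\sum_{i:\bar a_i\in E(\Gamma)}b_i$, $\beta=\lfloor t(\Gamma,b)/p(\Gamma)\rfloor$, $r=t(\Gamma,b)-\beta p(\Gamma)$, it is $\sum_{j\in[n]}[p^-(\Gamma,j)+r]x_j\ge r(\beta+1)+\sum_{i:\bar a_i\in E(\Gamma)}b_i$. Costs: $\tilde A=\binom{A}{I}$, $d=\binom{b}{0}$, $v$ = last column of $\tilde A$; for $x^*\in Q(A,b)$: $s^*=\tilde Ax^*-d$, $\mu=\lceil\mathbf{1}^Tx^*\rceil-\mathbf{1}^Tx^*$, $c^+(x^* )=\mu(s^*-(1-\mu)v)$, $c^-(x^* )=(1-\mu)(s^*+\mu v)$. In $D(A,x^* )$ arc $a_k$ ($k\in[m+n]$) has cost $c^+_k(x^* )$ and $\bar a_k$ has cost $c^-_k(x^* )$; the cost of a circuit is the sum of its arc costs. *)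

theory Defs
  imports Complex_Main
begin

text \<open>Indices: rows i in {1..m}, columns j in {1..n}; vectors are functions on nat
  of which only the coordinates 1..n matter. Nodes of D(A) are residues mod n
  (node n is identified with node 0).\<close>

definition cyc_interval :: "nat \<Rightarrow> nat \<Rightarrow> nat \<Rightarrow> nat set" where
  "cyc_interval n a t = {(a - 1 + s) mod n + 1 | s. s < t}"

definition circular_rep :: "nat \<Rightarrow> nat \<Rightarrow> (nat \<Rightarrow> nat \<Rightarrow> real) \<Rightarrow> (nat \<Rightarrow> nat) \<Rightarrow> (nat \<Rightarrow> nat) \<Rightarrow> bool" where
  "circular_rep m n A l k \<longleftrightarrow>
     (\<forall>i\<in>{1..m}. l i \<in> {1..n} \<and> 2 \<le> k i \<and> k i \<le> n - 1 \<and>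
        (\<forall>j\<in>{1..n}. A i j = (if j \<in> cyc_interval n (l i) (k i) then 1 else 0)))"

definition circular :: "nat \<Rightarrow> nat \<Rightarrow> (nat \<Rightarrow> nat \<Rightarrow> real) \<Rightarrow> bool" where
  "circular m n A \<longleftrightarrow> (\<exists>l k. circular_rep m n A l k)"

definition Qpoly :: "nat \<Rightarrow> nat \<Rightarrow> (nat \<Rightarrow> nat \<Rightarrow> real) \<Rightarrow> (nat \<Rightarrow> int) \<Rightarrow> (nat \<Rightarrow> real) set" where
  "Qpoly m n A b = {x. (\<forall>j\<in>{1..n}. x j \<ge> 0) \<and>
      (\<forall>i\<in>{1..m}. (\<Sum>j=1..n. A i j * x j) \<ge> of_int (b i))}"

text \<open>Q*(A,b) = conv(Q(A,b) \<inter> Z^n), written out as finite convex combinations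
  (equality of points means equality of the coordinates 1..n).\<close>
definition Qint_hull :: "nat \<Rightarrow> nat \<Rightarrow> (nat \<Rightarrow> nat \<Rightarrow> real) \<Rightarrow> (nat \<Rightarrow> int) \<Rightarrow> (nat \<Rightarrow> real) set" where
  "Qint_hull m n A b = {x. \<exists>F u. finite F \<and>
      F \<subseteq> {y \<in> Qpoly m n A b. \<forall>j\<in>{1..n}. y j \<in> \<int>} \<and>
      (\<forall>y\<in>F. u y \<ge> (0::real)) \<and> (\<Sum>y\<in>F. u y) = 1 \<and>
      (\<forall>j\<in>{1..n}. x j = (\<Sum>y\<in>F. u y * y j))}"

text \<open>Arcs of D(A): (True, k) is a_k and (False, k) is the reverse arc, k in {1..m+n}.\<close>
type_synonym arc = "bool \<times> nat"

definition fwd_ends :: "nat \<Rightarrow> nat \<Rightarrow> (nat \<Rightarrow> nat) \<Rightarrow> (nat \<Rightarrow> nat) \<Rightarrow> nat \<Rightarrow> nat \<times> nat" where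
  "fwd_ends m n l k i =
     (if i \<le> m then ((l i - 1) mod n, (l i + k i - 1) mod n)
      else ((i - m - 1) mod n, (i - m) mod n))"

definition arc_tail :: "nat \<Rightarrow> nat \<Rightarrow> (nat \<Rightarrow> nat) \<Rightarrow> (nat \<Rightarrow> nat) \<Rightarrow> arc \<Rightarrow> nat" where
  "arc_tail m n l k a = (if fst a then fst (fwd_ends m n l k (snd a)) else snd (fwd_ends m n l k (snd a)))"

definition arc_head :: "nat \<Rightarrow> nat \<Rightarrow> (nat \<Rightarrow> nat) \<Rightarrow> (nat \<Rightarrow> nat) \<Rightarrow> arc \<Rightarrow> nat" where
  "arc_head m n l k a = (if fst a then snd (fwd_ends m n l k (snd a)) else fst (fwd_ends m n l k (snd a)))"

definition arc_len :: "nat \<Rightarrow> (nat \<Rightarrow> nat) \<Rightarrow> arc \<Rightarrow> int" where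
  "arc_len m k a = (let L = (if snd a \<le> m then int (k (snd a)) else 1) in if fst a then L else - L)"

definition jumps :: "nat \<Rightarrow> nat \<Rightarrow> (nat \<Rightarrow> nat) \<Rightarrow> (nat \<Rightarrow> nat) \<Rightarrow> arc \<Rightarrow> nat \<Rightarrow> bool" where
  "jumps m n l k a j = (if snd a \<le> m then j \<in> cyc_interval n (l (snd a)) (k (snd a)) else j = snd a - m)"

definition is_circuit :: "nat \<Rightarrow> nat \<Rightarrow> (nat \<Rightarrow> nat) \<Rightarrow> (nat \<Rightarrow> nat) \<Rightarrow> arc list \<Rightarrow> bool" where
  "is_circuit m n l k \<Gamma> \<longleftrightarrow> \<Gamma> \<noteq> [] \<and> (\<forall>a\<in>set \<Gamma>. snd a \<in> {1..m+n}) \<and>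
     distinct (map (arc_tail m n l k) \<Gamma>) \<and>
     (\<forall>t<length \<Gamma>. arc_head m n l k (\<Gamma> ! t) = arc_tail m n l k (\<Gamma> ! ((t + 1) mod length \<Gamma>)))"

definition winding :: "nat \<Rightarrow> nat \<Rightarrow> (nat \<Rightarrow> nat) \<Rightarrow> arc list \<Rightarrow> int" where
  "winding m n k \<Gamma> = (\<Sum>a\<in>set \<Gamma>. arc_len m k a) div int n"

definition p_minus :: "nat \<Rightarrow> nat \<Rightarrow> (nat \<Rightarrow> nat) \<Rightarrow> (nat \<Rightarrow> nat) \<Rightarrow> arc list \<Rightarrow> nat \<Rightarrow> nat" where
  "p_minus m n l k \<Gamma> j = card {a \<in> set \<Gamma>. \<not> fst a \<and> jumps m n l k a j}"

definition t_val :: "nat \<Rightarrow> (nat \<Rightarrow> int) \<Rightarrow> arc list \<Rightarrow> int" where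
  "t_val m b \<Gamma> = (\<Sum>i\<in>{i\<in>{1..m}. (True, i) \<in> set \<Gamma>}. b i) - (\<Sum>i\<in>{i\<in>{1..m}. (False, i) \<in> set \<Gamma>}. b i)"

definition rev_b :: "nat \<Rightarrow> (nat \<Rightarrow> int) \<Rightarrow> arc list \<Rightarrow> int" where
  "rev_b m b \<Gamma> = (\<Sum>i\<in>{i\<in>{1..m}. (False, i) \<in> set \<Gamma>}. b i)"

definition gamma_ineq_violated :: "nat \<Rightarrow> nat \<Rightarrow> (nat \<Rightarrow> nat) \<Rightarrow> (nat \<Rightarrow> nat) \<Rightarrow> (nat \<Rightarrow> int) \<Rightarrow> arc list \<Rightarrow> (nat \<Rightarrow> real) \<Rightarrow> bool" where
  "gamma_ineq_violated m n l k b \<Gamma> x \<longleftrightarrow>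
     (let p = winding m n k \<Gamma>; t = t_val m b \<Gamma>;
          \<beta> = \<lfloor>real_of_int t / real_of_int p\<rfloor>; r = t - \<beta> * p
      in (\<Sum>j=1..n. (real (p_minus m n l k \<Gamma> j) + of_int r) * x j)
           < of_int (r * (\<beta> + 1) + rev_b m b \<Gamma>))"

definition ext_row :: "nat \<Rightarrow> (nat \<Rightarrow> nat \<Rightarrow> real) \<Rightarrow> nat \<Rightarrow> nat \<Rightarrow> real" where
  "ext_row m A r j = (if r \<le> m then A r j else if j = r - m then 1 else 0)"

definition slack :: "nat \<Rightarrow> nat \<Rightarrow> (nat \<Rightarrow> nat \<Rightarrow> real) \<Rightarrow> (nat \<Rightarrow> int) \<Rightarrow> (nat \<Rightarrow> real) \<Rightarrow> nat \<Rightarrow> real" where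
  "slack m n A b x r = (\<Sum>j=1..n. ext_row m A r j * x j) - (if r \<le> m then of_int (b r) else 0)"

definition mu :: "nat \<Rightarrow> (nat \<Rightarrow> real) \<Rightarrow> real" where
  "mu n x = of_int \<lceil>\<Sum>j=1..n. x j\<rceil> - (\<Sum>j=1..n. x j)"

definition c_plus :: "nat \<Rightarrow> nat \<Rightarrow> (nat \<Rightarrow> nat \<Rightarrow> real) \<Rightarrow> (nat \<Rightarrow> int) \<Rightarrow> (nat \<Rightarrow> real) \<Rightarrow> nat \<Rightarrow> real" where
  "c_plus m n A b x r = mu n x * (slack m n A b x r - (1 - mu n x) * ext_row m A r n)"

definition c_minus :: "nat \<Rightarrow> nat \<Rightarrow> (nat \<Rightarrow> nat \<Rightarrow> real) \<Rightarrow> (nat \<Rightarrow> int) \<Rightarrow> (nat \<Rightarrow> real) \<Rightarrow> nat \<Rightarrow> real" where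
  "c_minus m n A b x r = (1 - mu n x) * (slack m n A b x r + mu n x * ext_row m A r n)"

definition arc_cost :: "nat \<Rightarrow> nat \<Rightarrow> (nat \<Rightarrow> nat \<Rightarrow> real) \<Rightarrow> (nat \<Rightarrow> int) \<Rightarrow> (nat \<Rightarrow> real) \<Rightarrow> arc \<Rightarrow> real" where
  "arc_cost m n A b x a = (if fst a then c_plus m n A b x (snd a) else c_minus m n A b x (snd a))"

definition circuit_cost :: "nat \<Rightarrow> nat \<Rightarrow> (nat \<Rightarrow> nat \<Rightarrow> real) \<Rightarrow> (nat \<Rightarrow> int) \<Rightarrow> (nat \<Rightarrow> real) \<Rightarrow> arc list \<Rightarrow> real" where
  "circuit_cost m n A b x \<Gamma> = (\<Sum>a\<in>set \<Gamma>. arc_cost m n A b x a)"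

end

theory Submission
  imports Defs
begin


definition Zs :: "(nat \<Rightarrow> real) \<Rightarrow> nat \<Rightarrow> real" where
  "Zs y v = (\<Sum>j=1..v. y j)"

lemma Zs_Suc: "Zs y (Suc q) = Zs y q + y (Suc q)" unfolding Zs_def by simp

lemma sum_wrap:
  assumes n: "0 < n" and u: "u < n"
  shows "(\<Sum>s<K. y ((u+s) mod n + 1)) = Zs y ((u+K) mod n) - Zs y u + real ((u+K) div n) * Zs y n"
proof (induction K)
  case 0
  then show ?case using u by simp
next
  case (Suc K)
  have "(\<Sum>s<Suc K. y ((u+s) mod n + 1)) = Zs y ((u+K) mod n) - Zs y u + real ((u+K) div n) * Zs y n + y ((u+K) mod n + 1)"
    using Suc by simp
  also have "\<dots> = Zs y ((u+Suc K) mod n) - Zs y u + real ((u+Suc K) div n) * Zs y n"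
  proof (cases "Suc ((u+K) mod n) = n")
    case True
    have "Zs y n = Zs y ((u+K) mod n) + y n" using Zs_Suc[of y "(u+K) mod n"] True by simp
    have e1: "(u + Suc K) mod n = 0" using True mod_Suc[of "u+K" n] by simp
    have e2: "(u + Suc K) div n = Suc ((u+K) div n)" using e1 div_Suc[of "u+K" n] by simp
    show ?thesis unfolding e1 e2 using True \<open>Zs y n = _\<close> by (simp add: Zs_def algebra_simps)
  next
    case False
    have "Zs y (Suc ((u+K) mod n)) = Zs y ((u+K) mod n) + y (Suc ((u+K) mod n))" by (rule Zs_Suc)
    have e1: "(u + Suc K) mod n = Suc ((u+K) mod n)" using False mod_Suc[of "u+K" n] by simp
    have e2: "(u + Suc K) div n = (u+K) div n" using e1 div_Suc[of "u+K" n] by simp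
    show ?thesis unfolding e1 e2 using \<open>Zs y (Suc _) = _\<close> by simp
  qed
  finally show ?case .
qed

lemma rot_sum:
  fixes g :: "nat \<Rightarrow> 'b::comm_monoid_add"
  shows "(\<Sum>t<N. g ((t+1) mod N)) = (\<Sum>t<N. g t)"
proof (cases N)
  case 0 then show ?thesis by simp
next
  case (Suc M)
  have "(\<Sum>t<Suc M. g ((t+1) mod Suc M)) = (\<Sum>t<M. g ((t+1) mod Suc M)) + g 0"
    by simp
  also have "(\<Sum>t<M. g ((t+1) mod Suc M)) = (\<Sum>t<M. g (Suc t))"
    by (intro sum.cong) auto
  also have "\<dots> + g 0 = (\<Sum>t<Suc M. g t)"
    by (subst sum.lessThan_Suc_shift) (simp add: add.commute)
  finally show ?thesis using Suc by simp
qed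

lemma circuit_distinct: "is_circuit m n l k \<Gamma> \<Longrightarrow> distinct \<Gamma>"
  unfolding is_circuit_def using distinct_map by blast

lemma set_sum_list:
  assumes "distinct G"
  shows "(\<Sum>a\<in>set G. f a) = (\<Sum>t<length G. f (G ! t))"
  using assms by (simp add: sum.distinct_set_conv_list sum_list_sum_nth atLeast0LessThan)

lemma telescope:
  fixes F :: "nat \<Rightarrow> 'b::ab_group_add"
  assumes c: "is_circuit m n l k \<Gamma>"
  shows "(\<Sum>a\<in>set \<Gamma>. F (arc_head m n l k a) - F (arc_tail m n l k a)) = 0"
proof -
  let ?N = "length \<Gamma>"
  have d: "distinct \<Gamma>" using circuit_distinct[OF c] .
  have "(\<Sum>a\<in>set \<Gamma>. F (arc_head m n l k a) - F (arc_tail m n l k a))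
     = (\<Sum>t<?N. F (arc_head m n l k (\<Gamma>!t))) - (\<Sum>t<?N. F (arc_tail m n l k (\<Gamma>!t)))"
    by (simp add: set_sum_list[OF d] sum_subtractf)
  also have "(\<Sum>t<?N. F (arc_head m n l k (\<Gamma>!t))) = (\<Sum>t<?N. F (arc_tail m n l k (\<Gamma>!((t+1) mod ?N))))"
    using c unfolding is_circuit_def by (intro sum.cong) auto
  also have "\<dots> = (\<Sum>t<?N. F (arc_tail m n l k (\<Gamma>!t)))"
    by (rule rot_sum[where g = "\<lambda>t. F (arc_tail m n l k (\<Gamma>!t))"])
  finally show ?thesis by simp
qed


lemma modinj: assumes "(a + s) mod n = (a + s') mod (n::nat)" "s < n" "s' < n" shows "s = s'"
proof -
  have "\<And>s s'. (a + s) mod n = (a + s') mod (n::nat) \<Longrightarrow> s < n \<Longrightarrow> s' < n \<Longrightarrow> s \<le> s' \<Longrightarrow> s = s'"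
  proof -
    fix s s' assume h: "(a + s) mod n = (a + s') mod (n::nat)" "s < n" "s' < n" "s \<le> s'"
    hence "n dvd (a+s') - (a+s)" using mod_eq_dvd_iff_nat[of "a+s" "a+s'" n] by simp
    hence "n dvd s' - s" by simp
    moreover have "s' - s < n" using h by simp
    ultimately show "s = s'" using h(4) by (metis dvd_imp_le le_antisym not_less diff_is_0_eq' linorder_not_le zero_less_diff)
  qed
  thus ?thesis using assms by (metis nat_le_linear)
qed


definition flen :: "nat \<Rightarrow> (nat \<Rightarrow> nat) \<Rightarrow> nat \<Rightarrow> nat" where
  "flen m k i = (if i \<le> m then k i else 1)"

lemma n_pos:
  assumes circ: "circular_rep m n A l k" and i: "i \<in> {1..m+n}"
  shows "0 < n"
proof (rule ccontr)
  assume "\<not> 0 < n"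
  hence "n = 0" by simp
  with i have "i \<in> {1..m}" by simp
  with circ have "2 \<le> k i \<and> k i \<le> n - 1" unfolding circular_rep_def by blast
  with \<open>n = 0\<close> show False by linarith
qed

lemma arc_fwd:
  assumes circ: "circular_rep m n A l k" and i: "i \<in> {1..m+n}"
  shows "fst (fwd_ends m n l k i) < n \<and>
     snd (fwd_ends m n l k i) = (fst (fwd_ends m n l k i) + flen m k i) mod n \<and>
     (\<forall>y. (\<Sum>j=1..n. ext_row m A i j * y j) = (\<Sum>s<flen m k i. y ((fst (fwd_ends m n l k i) + s) mod n + 1)))"
proof -
  have n: "0 < n" using n_pos[OF circ i] .
  show ?thesis
  proof (cases "i \<le> m")
    case True
    from circ True i have L: "l i \<in> {1..n}" "2 \<le> k i" "k i \<le> n-1"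
      "\<forall>j\<in>{1..n}. A i j = (if j \<in> cyc_interval n (l i) (k i) then 1 else 0)"
      unfolding circular_rep_def by auto
    have fe: "fwd_ends m n l k i = (l i - 1, (l i - 1 + k i) mod n)"
      using True L(1) unfolding fwd_ends_def by auto
    have fl: "flen m k i = k i" using True by (simp add: flen_def)
    define f where "f s = (l i - 1 + s) mod n + 1" for s
    have C: "cyc_interval n (l i) (k i) = f ` {..<k i}"
      unfolding cyc_interval_def f_def by auto
    have Csub: "cyc_interval n (l i) (k i) \<subseteq> {1..n}"
      unfolding C f_def using n by (auto simp: Suc_leI)
    have inj: "inj_on f {..<k i}"
    proof
      fix s s' assume "s \<in> {..<k i}" "s' \<in> {..<k i}" "f s = f s'"
      thus "s = s'" using modinj[of "l i - 1" s n s'] L(3) unfolding f_def by auto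
    qed
    have "\<And>y. (\<Sum>j=1..n. ext_row m A i j * y j) = (\<Sum>s<k i. y (f s))"
    proof -
      fix y :: "nat \<Rightarrow> real"
      have "(\<Sum>j=1..n. ext_row m A i j * y j) = (\<Sum>j=1..n. if j \<in> cyc_interval n (l i) (k i) then y j else 0)"
        using L(4) True by (intro sum.cong) (auto simp: ext_row_def)
      also have "\<dots> = sum y ({1..n} \<inter> cyc_interval n (l i) (k i))"
        by (simp add: sum.inter_restrict)
      also have "{1..n} \<inter> cyc_interval n (l i) (k i) = f ` {..<k i}" using Csub C by blast
      also have "sum y (f ` {..<k i}) = (\<Sum>s<k i. y (f s))" by (simp add: sum.reindex[OF inj])
      finally show "(\<Sum>j=1..n. ext_row m A i j * y j) = (\<Sum>s<k i. y (f s))" .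
    qed
    moreover have "l i - 1 < n" using L(1) by auto
    ultimately show ?thesis unfolding fe fl f_def by simp
  next
    case False
    define j where "j = i - m"
    have j: "i = m + j" "j \<in> {1..n}" using i False unfolding j_def by auto
    have fe: "fwd_ends m n l k i = (j - 1, j mod n)"
      using False j unfolding fwd_ends_def by auto
    have fl: "flen m k i = 1" using False by (simp add: flen_def)
    have "\<And>y. (\<Sum>j'=1..n. ext_row m A i j' * y j') = y j"
    proof -
      fix y :: "nat \<Rightarrow> real"
      have "(\<Sum>j'=1..n. ext_row m A i j' * y j') = (\<Sum>j'=1..n. if j' = j then y j' else 0)"
        using False j by (intro sum.cong) (auto simp: ext_row_def)
      also have "\<dots> = y j" using j(2) by simp
      finally show "(\<Sum>j'=1..n. ext_row m A i j' * y j') = y j" .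
    qed
    moreover have "(j - 1 + 0) mod n + 1 = j" "j - 1 + 1 = j" using j(2) by auto
    ultimately show ?thesis using fe fl j(2) by auto
  qed
qed


lemma card_sum: "finite G \<Longrightarrow> real (card {a\<in>G. P a}) = (\<Sum>a\<in>G. if P a then 1 else 0)"
  by (simp add: sum.If_cases Int_def)


lemma alg:
  fixes SF SR mu T :: real and p t C bt r :: int
  assumes SF: "SF \<ge> 0" and SR: "SR \<ge> 0" and mu0: "0 \<le> mu" and mu1: "mu < 1"
    and T: "T = of_int C - mu" and S: "SF - SR = of_int p * T - of_int t"
    and cost: "mu*SF + (1-mu)*SR - mu*(1-mu)*of_int p < 0"
    and r: "r = t - bt * p"
    and pp: "p > 0 \<Longrightarrow> 0 \<le> r \<and> r < p" and pn: "p < 0 \<Longrightarrow> p < r \<and> r \<le> 0"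
  shows "p \<noteq> 0 \<and> SR + of_int r * T < of_int (r * (bt + 1))"
proof -
  have p0: "p \<noteq> 0"
  proof
    assume "p = 0"
    hence "mu*SF + (1-mu)*SR < 0" using cost by simp
    moreover have "mu*SF \<ge> 0" "(1-mu)*SR \<ge> 0" using SF SR mu0 mu1 by auto
    ultimately show False by linarith
  qed
  define D where "D = C - 1 - bt"
  have tt: "of_int t = of_int r + of_int bt * (of_int p::real)" using r by simp
  have SFe: "SF = SR + of_int p * (of_int D + 1) - of_int p * mu - of_int r"
    using S T tt unfolding D_def by (simp add: algebra_simps)
  have ce: "mu*SF + (1-mu)*SR - mu*(1-mu)*of_int p = SR + mu*(of_int p * of_int D - of_int r)"
    unfolding SFe by (simp add: algebra_simps)
  have h1: "SR < mu*(of_int r - of_int p * of_int D)" using cost ce by (simp add: algebra_simps)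
  have id: "(1-mu)*(of_int r - of_int p*(of_int D+1)) = (of_int r + of_int p * mu - of_int p*(of_int D+1)) - mu*(of_int r - of_int p * of_int D)"
    by (simp add: algebra_simps)
  have "(1-mu)*(of_int r - of_int p*(of_int D+1)) < 0" using id h1 SF SFe by linarith
  hence "of_int r - of_int p*(of_int D+1) < (0::real)" using mu1
    by (simp add: mult_less_0_iff)
  hence h3: "r < p*(D+1)" by (metis of_int_less_iff of_int_mult of_int_add of_int_1 diff_less_0_iff_less)
  have "0 < mu*(of_int r - of_int p * of_int D)" using h1 SR by linarith
  hence "(0::real) < of_int r - of_int p * of_int D" using mu0 by (simp add: zero_less_mult_iff)
  hence h4: "p*D < r" by (metis of_int_less_iff of_int_mult diff_gt_0_iff_gt)
  show ?thesis
  proof (cases "p > 0")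
    case True
    with pp have r0: "0 \<le> r" "r < p" by auto
    have "D \<ge> 0" using h3 r0 True by (smt (verit) mult_le_0_iff)
    moreover have "D < 1" using h4 r0 True by (smt (verit) mult_le_cancel_left1)
    ultimately have D0: "D = 0" by simp
    hence "of_int C = of_int bt + (1::real)" unfolding D_def by simp
    hence Teq: "T = of_int bt + 1 - mu" using T by simp
    have "SR + of_int r * T = SR - mu * of_int r + of_int (r * (bt + 1))" unfolding Teq by (simp add: algebra_simps)
    thus ?thesis using p0 h1 D0 by (simp add: algebra_simps)
  next
    case False
    hence "p < 0" using p0 by simp
    hence "p*(D+1) < p*D" by (simp add: algebra_simps)
    thus ?thesis using h3 h4 by simp
  qed
qed


definition Wr :: "nat \<Rightarrow> nat \<Rightarrow> (nat \<Rightarrow> nat) \<Rightarrow> (nat \<Rightarrow> nat) \<Rightarrow> nat \<Rightarrow> nat" where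
  "Wr m n l k i = (fst (fwd_ends m n l k i) + flen m k i) div n"

lemma arc_ident:
  assumes circ: "circular_rep m n A l k" and i: "snd a \<in> {1..m+n}"
  shows "(if fst a then 1 else -1) * (\<Sum>j=1..n. ext_row m A (snd a) j * y j)
      = Zs y (arc_head m n l k a) - Zs y (arc_tail m n l k a) + (if fst a then 1 else -1) * real (Wr m n l k (snd a)) * Zs y n"
    and "arc_len m k a = int (arc_head m n l k a) - int (arc_tail m n l k a) + (if fst a then 1 else -1) * int (Wr m n l k (snd a)) * int n"
proof -
  have n: "0 < n" using n_pos[OF circ i] .
  define u where "u = fst (fwd_ends m n l k (snd a))"
  define K where "K = flen m k (snd a)"
  have F: "u < n" "snd (fwd_ends m n l k (snd a)) = (u + K) mod n"
     "(\<Sum>j=1..n. ext_row m A (snd a) j * y j) = (\<Sum>s<K. y ((u + s) mod n + 1))"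
    using arc_fwd[OF circ i] unfolding u_def K_def by auto
  have S: "(\<Sum>j=1..n. ext_row m A (snd a) j * y j) = Zs y ((u+K) mod n) - Zs y u + real ((u+K) div n) * Zs y n"
    using F(3) sum_wrap[OF n F(1)] by simp
  have Wd: "Wr m n l k (snd a) = (u+K) div n" unfolding Wr_def u_def K_def by simp
  show "(if fst a then 1 else -1) * (\<Sum>j=1..n. ext_row m A (snd a) j * y j)
      = Zs y (arc_head m n l k a) - Zs y (arc_tail m n l k a) + (if fst a then 1 else -1) * real (Wr m n l k (snd a)) * Zs y n"
    unfolding S Wd arc_head_def arc_tail_def F(2) u_def[symmetric] by (simp add: algebra_simps)
  have L: "arc_len m k a = (if fst a then int K else - int K)"
    unfolding arc_len_def K_def flen_def by (simp add: Let_def)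
  have dm: "int u + int K = int ((u+K) mod n) + int ((u+K) div n) * int n"
    by (metis div_mult_mod_eq of_nat_add of_nat_mult add.commute)
  show "arc_len m k a = int (arc_head m n l k a) - int (arc_tail m n l k a) + (if fst a then 1 else -1) * int (Wr m n l k (snd a)) * int n"
    unfolding L Wd arc_head_def arc_tail_def F(2) u_def[symmetric] using dm by (simp add: algebra_simps)
qed

lemma ext_row_jumps:
  assumes circ: "circular_rep m n A l k" and i: "snd a \<in> {1..m+n}" and j: "j \<in> {1..n}"
  shows "ext_row m A (snd a) j = (if jumps m n l k a j then 1 else 0)"
  using assms unfolding ext_row_def jumps_def circular_rep_def by auto

lemma sum_side:
  assumes "finite G" "\<forall>a\<in>G. snd a \<ge> 1"
  shows "(\<Sum>i\<in>{i\<in>{1..m}. (f,i)\<in>G}. g i) = (\<Sum>a\<in>G. if fst a = f \<and> snd a \<le> m then g (snd a) else (0::'b::comm_monoid_add))"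
proof -
  have "(\<Sum>a\<in>G. if fst a = f \<and> snd a \<le> m then g (snd a) else 0) = sum (g \<circ> snd) {a\<in>G. fst a = f \<and> snd a \<le> m}"
    using assms(1) by (simp add: sum.inter_filter)
  also have "\<dots> = sum g (snd ` {a\<in>G. fst a = f \<and> snd a \<le> m})"
    by (rule sum.reindex[symmetric]) (auto simp: inj_on_def prod_eq_iff)
  also have "snd ` {a\<in>G. fst a = f \<and> snd a \<le> m} = {i\<in>{1..m}. (f,i)\<in>G}"
    using assms(2) by force
  finally show ?thesis by simp
qed



theorem lemma4p7:
  fixes m n :: nat and A :: "nat \<Rightarrow> nat \<Rightarrow> real" and l k :: "nat \<Rightarrow> nat"
    and b :: "nat \<Rightarrow> int" and x :: "nat \<Rightarrow> real" and \<Gamma> :: "arc list"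
  assumes circ: "circular_rep m n A l k"
    and b_nonneg: "\<forall>i\<in>{1..m}. b i \<ge> 0"
    and x_Q: "x \<in> Qpoly m n A b"
    and x_notQ: "x \<notin> Qint_hull m n A b"
    and cyc: "is_circuit m n l k \<Gamma>"
    and neg: "circuit_cost m n A b x \<Gamma> < 0"
  shows "winding m n k \<Gamma> \<noteq> 0 \<and> gamma_ineq_violated m n l k b \<Gamma> x"
proof -
  define G where "G = set \<Gamma>"
  have fin: "finite G" unfolding G_def by simp
  have arcs: "\<forall>a\<in>G. snd a \<in> {1..m+n}" using cyc unfolding is_circuit_def G_def by blast
  obtain a0 where "a0 \<in> G" using cyc unfolding is_circuit_def G_def by (metis list.set_sel(1))
  hence n: "0 < n" using n_pos[OF circ] arcs by blast
  define sg where "sg a = (if fst a then 1 else -1::real)" for a :: arc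
  define P where "P = (\<Sum>a\<in>G. (if fst a then 1 else -1) * int (Wr m n l k (snd a)))"
  have lensum: "(\<Sum>a\<in>G. arc_len m k a) = int n * P"
  proof -
    have "(\<Sum>a\<in>G. arc_len m k a) = (\<Sum>a\<in>G. (int (arc_head m n l k a) - int (arc_tail m n l k a))
        + (if fst a then 1 else -1) * int (Wr m n l k (snd a)) * int n)"
      using arc_ident(2)[OF circ] arcs by (intro sum.cong) auto
    also have "\<dots> = (\<Sum>a\<in>G. int (arc_head m n l k a) - int (arc_tail m n l k a)) + P * int n"
      unfolding P_def by (simp add: sum.distrib sum_distrib_right)
    also have "(\<Sum>a\<in>G. int (arc_head m n l k a) - int (arc_tail m n l k a)) = 0"
      unfolding G_def by (rule telescope[OF cyc])
    finally show ?thesis by simp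
  qed
  have wind: "winding m n k \<Gamma> = P"
    unfolding winding_def G_def[symmetric] lensum using n by simp
  have Preal: "real_of_int P = (\<Sum>a\<in>G. sg a * real (Wr m n l k (snd a)))"
    unfolding P_def of_int_sum sg_def by (intro sum.cong) auto
  have Rsum: "(\<Sum>a\<in>G. sg a * (\<Sum>j=1..n. ext_row m A (snd a) j * y j)) = of_int P * Zs y n" for y
  proof -
    have "(\<Sum>a\<in>G. sg a * (\<Sum>j=1..n. ext_row m A (snd a) j * y j))
       = (\<Sum>a\<in>G. (Zs y (arc_head m n l k a) - Zs y (arc_tail m n l k a)) + sg a * real (Wr m n l k (snd a)) * Zs y n)"
      using arc_ident(1)[OF circ] arcs unfolding sg_def by (intro sum.cong) auto
    also have "\<dots> = (\<Sum>a\<in>G. Zs y (arc_head m n l k a) - Zs y (arc_tail m n l k a)) + of_int P * Zs y n"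
      unfolding Preal by (simp add: sum.distrib sum_distrib_right)
    also have "(\<Sum>a\<in>G. Zs y (arc_head m n l k a) - Zs y (arc_tail m n l k a)) = 0"
      unfolding G_def by (rule telescope[OF cyc])
    finally show ?thesis by simp
  qed
  define T where "T = (\<Sum>j=1..n. x j)"
  have TZ: "T = Zs x n" unfolding T_def Zs_def ..
  define R where "R a = (\<Sum>j=1..n. ext_row m A (snd a) j * x j)" for a :: arc
  define bb where "bb a = (if snd a \<le> m then real_of_int (b (snd a)) else 0)" for a :: arc
  have slk: "slack m n A b x (snd a) = R a - bb a" for a
    unfolding slack_def R_def bb_def by simp
  have xnn: "\<forall>j\<in>{1..n}. x j \<ge> 0" using x_Q unfolding Qpoly_def by blast
  have slk_nn: "R a - bb a \<ge> 0" if a: "a \<in> G" for a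
  proof (cases "snd a \<le> m")
    case True
    hence "snd a \<in> {1..m}" using arcs a by auto
    hence "(\<Sum>j=1..n. A (snd a) j * x j) \<ge> of_int (b (snd a))" using x_Q unfolding Qpoly_def by blast
    thus ?thesis using True unfolding R_def bb_def ext_row_def by simp
  next
    case False
    have "R a \<ge> 0" unfolding R_def using xnn False
      by (intro sum_nonneg) (auto simp: ext_row_def)
    thus ?thesis using False unfolding bb_def by simp
  qed
  define en where "en j = (if j = n then 1 else 0::real)" for j
  have v: "(\<Sum>j=1..n. ext_row m A r j * en j) = ext_row m A r n" for r
  proof -
    have "(\<Sum>j=1..n. ext_row m A r j * en j) = (\<Sum>j=1..n. if j = n then ext_row m A r n else 0)"
      unfolding en_def by (intro sum.cong) auto
    also have "\<dots> = ext_row m A r n" using n by simp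
    finally show ?thesis .
  qed
  have Zen: "Zs en n = 1"
  proof -
    have "Zs en n = (\<Sum>j=1..n. if j = n then 1 else 0::real)" unfolding Zs_def en_def ..
    also have "\<dots> = 1" using n by simp
    finally show ?thesis .
  qed
  have Vsum: "(\<Sum>a\<in>G. sg a * ext_row m A (snd a) n) = of_int P"
    using Rsum[of en] v Zen by simp
  have snd1: "\<forall>a\<in>G. snd a \<ge> 1" using arcs by auto
  have ifz: "\<And>c v. real_of_int (if c then v else 0) = (if c then real_of_int v else 0)" by simp
  have tval: "real_of_int (t_val m b \<Gamma>) = (\<Sum>a\<in>G. sg a * bb a)"
  proof -
    have "t_val m b \<Gamma> = (\<Sum>a\<in>G. if fst a = True \<and> snd a \<le> m then b (snd a) else 0)
       - (\<Sum>a\<in>G. if fst a = False \<and> snd a \<le> m then b (snd a) else 0)"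
      unfolding t_val_def G_def[symmetric] by (simp only: sum_side[OF fin snd1])
    hence "real_of_int (t_val m b \<Gamma>) = (\<Sum>a\<in>G. if fst a = True \<and> snd a \<le> m then real_of_int (b (snd a)) else 0)
       - (\<Sum>a\<in>G. if fst a = False \<and> snd a \<le> m then real_of_int (b (snd a)) else 0)"
      by (simp add: of_int_sum ifz)
    also have "\<dots> = (\<Sum>a\<in>G. sg a * bb a)"
      unfolding sum_subtractf[symmetric] sg_def bb_def by (intro sum.cong) auto
    finally show ?thesis .
  qed
  have revb: "real_of_int (rev_b m b \<Gamma>) = (\<Sum>a\<in>G. if \<not> fst a then bb a else 0)"
  proof -
    have "rev_b m b \<Gamma> = (\<Sum>a\<in>G. if fst a = False \<and> snd a \<le> m then b (snd a) else 0)"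
      unfolding rev_b_def G_def[symmetric] by (simp only: sum_side[OF fin snd1])
    hence "real_of_int (rev_b m b \<Gamma>) = (\<Sum>a\<in>G. if fst a = False \<and> snd a \<le> m then real_of_int (b (snd a)) else 0)"
      by (simp add: of_int_sum ifz)
    also have "\<dots> = (\<Sum>a\<in>G. if \<not> fst a then bb a else 0)"
      unfolding bb_def by (intro sum.cong) auto
    finally show ?thesis .
  qed
  define SF where "SF = (\<Sum>a\<in>G. if fst a then R a - bb a else 0)"
  define SR where "SR = (\<Sum>a\<in>G. if \<not> fst a then R a - bb a else 0)"
  have SF0: "SF \<ge> 0" unfolding SF_def using slk_nn by (intro sum_nonneg) auto
  have SR0: "SR \<ge> 0" unfolding SR_def using slk_nn by (intro sum_nonneg) auto
  have SFSR: "SF - SR = of_int P * T - of_int (t_val m b \<Gamma>)"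
  proof -
    have "SF - SR = (\<Sum>a\<in>G. sg a * R a) - (\<Sum>a\<in>G. sg a * bb a)"
      unfolding SF_def SR_def sum_subtractf[symmetric] sg_def by (intro sum.cong) (auto simp: algebra_simps)
    also have "(\<Sum>a\<in>G. sg a * R a) = of_int P * T" unfolding R_def TZ by (rule Rsum)
    finally show ?thesis using tval by simp
  qed
  define mu' where "mu' = mu n x"
  have cost: "circuit_cost m n A b x \<Gamma> = mu'*SF + (1-mu')*SR - mu'*(1-mu')*of_int P"
  proof -
    have "circuit_cost m n A b x \<Gamma> = (\<Sum>a\<in>G. mu' * (if fst a then R a - bb a else 0)
          + (1-mu') * (if \<not> fst a then R a - bb a else 0) - mu'*(1-mu') * (sg a * ext_row m A (snd a) n))"
      unfolding circuit_cost_def G_def[symmetric]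
      by (intro sum.cong) (auto simp: arc_cost_def c_plus_def c_minus_def slk sg_def mu'_def algebra_simps)
    also have "\<dots> = mu'*SF + (1-mu')*SR - mu'*(1-mu')*(\<Sum>a\<in>G. sg a * ext_row m A (snd a) n)"
      unfolding SF_def SR_def by (simp add: sum.distrib sum_subtractf sum_distrib_left)
    finally show ?thesis using Vsum by simp
  qed
  have lhs: "(\<Sum>j=1..n. (real (p_minus m n l k \<Gamma> j) + of_int rr) * x j) = SR + real_of_int (rev_b m b \<Gamma>) + of_int rr * T" for rr
  proof -
    have "(\<Sum>j=1..n. real (p_minus m n l k \<Gamma> j) * x j)
        = (\<Sum>j=1..n. \<Sum>a\<in>G. (if \<not> fst a \<and> jumps m n l k a j then 1 else 0) * x j)"
      unfolding p_minus_def G_def[symmetric] using card_sum[OF fin]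
      by (simp add: sum_distrib_right)
    also have "\<dots> = (\<Sum>a\<in>G. \<Sum>j=1..n. (if \<not> fst a \<and> jumps m n l k a j then 1 else 0) * x j)"
      by (rule sum.swap)
    also have "\<dots> = (\<Sum>a\<in>G. if \<not> fst a then R a else 0)"
    proof (intro sum.cong refl)
      fix a assume a: "a \<in> G"
      have "R a = (\<Sum>j=1..n. (if jumps m n l k a j then 1 else 0) * x j)"
        unfolding R_def using ext_row_jumps[OF circ] arcs a by (intro sum.cong) auto
      thus "(\<Sum>j=1..n. (if \<not> fst a \<and> jumps m n l k a j then 1 else 0) * x j) = (if \<not> fst a then R a else 0)"
        by auto
    qed
    also have "\<dots> = SR + (\<Sum>a\<in>G. if \<not> fst a then bb a else 0)"
      unfolding SR_def sum.distrib[symmetric] by (intro sum.cong) auto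
    finally have "(\<Sum>j=1..n. real (p_minus m n l k \<Gamma> j) * x j) = SR + real_of_int (rev_b m b \<Gamma>)"
      using revb by simp
    thus ?thesis unfolding T_def by (simp add: algebra_simps sum.distrib sum_distrib_left)
  qed
  define t where "t = t_val m b \<Gamma>"
  define bt where "bt = \<lfloor>real_of_int t / real_of_int P\<rfloor>"
  define r where "r = t - bt * P"
  have btd: "bt = t div P" unfolding bt_def by (rule floor_divide_of_int_eq)
  have rmod: "r = t mod P" unfolding r_def btd by (simp add: minus_div_mult_eq_mod)
  have mu0: "0 \<le> mu'" unfolding mu'_def mu_def by (simp add: le_ceiling_iff ceiling_correct)
  have mu1: "mu' < 1" unfolding mu'_def mu_def by (simp add: ceiling_less_iff) linarith
  have Tm: "T = of_int \<lceil>T\<rceil> - mu'" unfolding mu'_def mu_def T_def by simp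
  have SFSR': "SF - SR = of_int P * T - of_int t" using SFSR t_def by simp
  have cost': "mu'*SF + (1-mu')*SR - mu'*(1-mu')*of_int P < 0" using cost neg by simp
  have pp: "0 \<le> r \<and> r < P" if "P > 0" using that rmod pos_mod_sign pos_mod_bound by simp
  have pn: "P < r \<and> r \<le> 0" if "P < 0" using that rmod neg_mod_sign neg_mod_bound by simp
  have main: "P \<noteq> 0 \<and> SR + of_int r * T < of_int (r * (bt + 1))"
    by (rule alg[OF SF0 SR0 mu0 mu1 Tm SFSR' cost' r_def pp pn])
  show ?thesis
    unfolding gamma_ineq_violated_def Let_def wind t_def[symmetric] bt_def[symmetric] r_def[symmetric] lhs
    using main by simp
qed


end
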